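(* Let $n\ge2$ and let $\Pi$ be an $(n-1,n)$-Dyck path. A cell $c\in\lambda(\Pi)$ satisfies \[ \frac{\operatorname{arm}(c)}{\operatorname{leg}(c)}\le\frac{n-1}{n}<\frac{\operatorname{arm}(c)+1}{\operatorname{leg}(c)+1} \] (with $\frac00=0$ and $\frac x0=\infty$ for $x\ne0$) if and only if its south and east borders are both steps of $\Pi$, i.e. if and only if $\operatorname{arm}(c)=\operatorname{leg}(c)=0$.
   Context: An $(n-1,n)$-Dyck path is a lattice path from $(0,0)$ to $(n-1,n)$ of unit north and east steps staying weakly above the line $y=\frac{n}{n-1}x$. $\lambda(\Pi)$ is the set of unit cells of the rectangle $[0,n-1]\times[0,n]$ lying above (northwest of) $\Pi$. For $c\in\lambda(\Pi)$, $\operatorname{arm}(c)$ is the number of cells of $\lambda(\Pi)$ strictly east of $c$ in its row and $\operatorname{leg}(c)$ the number of cells of $\lambda(\Pi)$ strictly south of $c$ in its column. *)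

theory Defs
  imports Main "HOL-Library.Extended_Real"
begin

datatype step = N | E

definition pt :: "step list \<Rightarrow> nat \<Rightarrow> nat \<times> nat" where
  "pt p k = (count_list (take k p) E, count_list (take k p) N)"

text \<open>(n-1,n)-Dyck path: from (0,0) to (n-1,n), weakly above y = n/(n-1) x,
  i.e. n*x \<le> (n-1)*y at every lattice point of the path.\<close>
definition dyck :: "nat \<Rightarrow> step list \<Rightarrow> bool" where
  "dyck n p \<longleftrightarrow> count_list p E = n - 1 \<and> count_list p N = n \<and>
     (\<forall>k \<le> length p. n * fst (pt p k) \<le> (n - 1) * snd (pt p k))"

definition segs :: "step list \<Rightarrow> ((nat \<times> nat) \<times> (nat \<times> nat)) set" where
  "segs p = {(pt p k, pt p (Suc k)) | k. k < length p}"

text \<open>Cells are indexed by their lower-left corner (i,j).  A cell of row j lies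
  above (northwest of) the path iff it is west of the North step of the path
  going from height j to height j+1.\<close>
definition lam :: "step list \<Rightarrow> (nat \<times> nat) set" where
  "lam p = {(i, j). \<exists>k < length p. p ! k = N \<and> snd (pt p k) = j \<and> i < fst (pt p k)}"

definition arm :: "step list \<Rightarrow> nat \<times> nat \<Rightarrow> nat" where
  "arm p c = card {i'. fst c < i' \<and> (i', snd c) \<in> lam p}"

definition leg :: "step list \<Rightarrow> nat \<times> nat \<Rightarrow> nat" where
  "leg p c = card {j'. j' < snd c \<and> (fst c, j') \<in> lam p}"

definition frac :: "nat \<Rightarrow> nat \<Rightarrow> ereal" where
  "frac a b = (if b = 0 then (if a = 0 then 0 else \<infinity>) else ereal (real a / real b))"

end

theory Submission
  imports Defs
begin

lemma step_neq_E[simp]: "x \<noteq> E \<longleftrightarrow> x = N" by (cases x) auto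

lemma pt_0: "pt p 0 = (0,0)" by (simp add: pt_def)

lemma pt_Suc: "k < length p \<Longrightarrow> pt p (Suc k) = (if p!k = E then (Suc (fst (pt p k)), snd (pt p k)) else (fst (pt p k), Suc (snd (pt p k))))"
  by (cases "p!k") (auto simp: pt_def take_Suc_conv_app_nth)

lemma pt_mono: assumes "k \<le> k'" shows "fst (pt p k) \<le> fst (pt p k') \<and> snd (pt p k) \<le> snd (pt p k')"
proof -
  have "take k' p = take k p @ take (k'-k) (drop k p)" using take_add[of k "k'-k" p] assms by simp
  then show ?thesis by (simp add: pt_def)
qed

lemma pt_len: "pt p (length p) = (count_list p E, count_list p N)" by (simp add: pt_def)

lemma N_unique: assumes "k1 < length p" "k2 < length p" "p!k1 = N" "p!k2 = N" "snd (pt p k1) = snd (pt p k2)"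
  shows "k1 = k2"
proof (rule ccontr)
  assume "k1 \<noteq> k2"
  then consider "k1 < k2" | "k2 < k1" by linarith
  then show False
  proof cases
    case 1
    have "snd (pt p (Suc k1)) \<le> snd (pt p k2)" using pt_mono[of "Suc k1" k2 p] 1 by simp
    then show False using pt_Suc[OF assms(1)] assms by simp
  next
    case 2
    have "snd (pt p (Suc k2)) \<le> snd (pt p k1)" using pt_mono[of "Suc k2" k1 p] 2 by simp
    then show False using pt_Suc[OF assms(2)] assms by simp
  qed
qed

lemma seg_E: "((a,b),(Suc a,b)) \<in> segs p \<longleftrightarrow> (\<exists>k<length p. pt p k = (a,b) \<and> p!k = E)"
proof
  assume "((a,b),(Suc a,b)) \<in> segs p"
  then obtain k where k: "k < length p" "pt p k = (a,b)" "pt p (Suc k) = (Suc a, b)"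
    unfolding segs_def by auto
  have "p!k = E"
  proof (rule ccontr)
    assume "p!k \<noteq> E"
    then have "pt p (Suc k) = (a, Suc b)" using pt_Suc[OF k(1)] k(2) by simp
    with k(3) show False by simp
  qed
  with k show "\<exists>k<length p. pt p k = (a,b) \<and> p!k = E" by blast
next
  assume "\<exists>k<length p. pt p k = (a,b) \<and> p!k = E"
  then obtain k where k: "k < length p" "pt p k = (a,b)" "p!k = E" by blast
  then have "pt p (Suc k) = (Suc a, b)" using pt_Suc[OF k(1)] by simp
  moreover have "(pt p k, pt p (Suc k)) \<in> segs p" using k(1) unfolding segs_def by blast
  ultimately show "((a,b),(Suc a,b)) \<in> segs p" using k(2) by simp
qed

lemma seg_N: "((a,b),(a,Suc b)) \<in> segs p \<longleftrightarrow> (\<exists>k<length p. pt p k = (a,b) \<and> p!k = N)"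
proof
  assume "((a,b),(a,Suc b)) \<in> segs p"
  then obtain k where k: "k < length p" "pt p k = (a,b)" "pt p (Suc k) = (a, Suc b)"
    unfolding segs_def by auto
  have "p!k = N"
  proof (rule ccontr)
    assume "p!k \<noteq> N"
    then have "p!k = E" by (cases "p!k") auto
    then have "pt p (Suc k) = (Suc a, b)" using pt_Suc[OF k(1)] k(2) by simp
    with k(3) show False by simp
  qed
  with k show "\<exists>k<length p. pt p k = (a,b) \<and> p!k = N" by blast
next
  assume "\<exists>k<length p. pt p k = (a,b) \<and> p!k = N"
  then obtain k where k: "k < length p" "pt p k = (a,b)" "p!k = N" by blast
  then have "pt p (Suc k) = (a, Suc b)" using pt_Suc[OF k(1)] by simp
  moreover have "(pt p k, pt p (Suc k)) \<in> segs p" using k(1) unfolding segs_def by blast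
  ultimately show "((a,b),(a,Suc b)) \<in> segs p" using k(2) by simp
qed

lemma frac_lemma:
  assumes "n \<ge> 2" "l < n"
  shows "(frac a l \<le> ereal (real (n-1)/real n) \<and> ereal (real (n-1)/real n) < frac (a+1) (l+1)) \<longleftrightarrow> (a=0 \<and> l=0)"
proof -
  define m where "m = n - 1"
  have m: "n = m + 1" "m \<ge> 1" using assms by (auto simp: m_def)
  have r: "real (n-1) / real n = real m / (real m + 1)" using m by simp
  show ?thesis
  proof (cases "l = 0")
    case True
    have "real (n-1) / real n < 1" "0 \<le> real (n-1) / real n" using assms by auto
    then show ?thesis using True by (auto simp: frac_def)
  next
    case False
    have "\<not> (frac a l \<le> ereal (real (n-1)/real n) \<and> ereal (real (n-1)/real n) < frac (a+1) (l+1))"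
    proof
      assume H: "frac a l \<le> ereal (real (n-1)/real n) \<and> ereal (real (n-1)/real n) < frac (a+1) (l+1)"
      have H2: "frac a l \<le> ereal (real m / (real m + 1)) \<and> ereal (real m / (real m + 1)) < frac (a+1) (l+1)"
        using H unfolding r .
      from H2 False have h1: "real a / real l \<le> real m / (real m + 1)" by (simp add: frac_def)
      from H2 have h2: "real m / (real m + 1) < real (a+1) / real (l+1)" by (simp add: frac_def)
      have "real a * (real m + 1) \<le> real m * real l" using h1 False
        by (simp add: field_simps)
      hence "real (a*(m+1)) \<le> real (m*l)" by (simp only: of_nat_mult of_nat_add of_nat_1)
      hence e1: "a*(m+1) \<le> m*l" by (simp only: of_nat_le_iff)
      have "real m * (real l + 1) < (real a + 1) * (real m + 1)" using h2
        by (simp add: field_simps)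
      hence "real (m*(l+1)) < real ((a+1)*(m+1))" by (simp only: of_nat_mult of_nat_add of_nat_1)
      hence "m*(l+1) < (a+1)*(m+1)" by (simp only: of_nat_less_iff)
      hence "m*l < a*(m+1) + 1" by (simp add: algebra_simps)
      with e1 have eq: "m*l = a*(m+1)" by linarith
      have "(m+1) dvd m*l" unfolding eq by (rule dvd_triv_right)
      moreover have "coprime (m+1) m" by simp
      ultimately have "(m+1) dvd l" using coprime_dvd_mult_right_iff by blast
      with False have "m+1 \<le> l" by (simp add: dvd_imp_le)
      with assms m show False by simp
    qed
    then show ?thesis using False by simp
  qed
qed

lemma comb:
  assumes cN: "count_list p N = n" and lam: "(i,j) \<in> lam p"
  shows "leg p (i,j) < n"
    and "(((i, j), (Suc i, j)) \<in> segs p \<and> ((Suc i, j), (Suc i, Suc j)) \<in> segs p)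
         \<longleftrightarrow> (arm p (i, j) = 0 \<and> leg p (i, j) = 0)"
proof -
  obtain k0 where k0: "k0 < length p" "p!k0 = N" "snd (pt p k0) = j" "i < fst (pt p k0)"
    using lam unfolding lam_def by blast
  define X where "X = fst (pt p k0)"
  have armset: "{i'. fst (i,j) < i' \<and> (i', snd (i,j)) \<in> lam p} = {i<..<X}"
  proof (rule set_eqI)
    fix i'
    show "i' \<in> {i'. fst (i,j) < i' \<and> (i', snd (i,j)) \<in> lam p} \<longleftrightarrow> i' \<in> {i<..<X}"
    proof
      assume "i' \<in> {i'. fst (i,j) < i' \<and> (i', snd (i,j)) \<in> lam p}"
      then obtain k where k: "k < length p" "p!k = N" "snd (pt p k) = j" "i' < fst (pt p k)" "i < i'"
        unfolding lam_def by auto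
      have "k = k0" using N_unique[OF k(1) k0(1) k(2) k0(2)] k(3) k0(3) by simp
      then show "i' \<in> {i<..<X}" using k X_def by simp
    next
      assume "i' \<in> {i<..<X}"
      then show "i' \<in> {i'. fst (i,j) < i' \<and> (i', snd (i,j)) \<in> lam p}"
        using k0 X_def unfolding lam_def by auto
    qed
  qed
  have arm_eq: "arm p (i,j) = X - Suc i" unfolding arm_def armset by simp
  have legsub: "{j'. j' < snd (i,j) \<and> (fst (i,j), j') \<in> lam p} \<subseteq> {..<j}" by auto
  have legfin: "finite {j'. j' < snd (i,j) \<and> (fst (i,j), j') \<in> lam p}"
    using legsub finite_subset by blast
  have leg_le: "leg p (i,j) \<le> j" unfolding leg_def using card_mono[OF _ legsub] by simp
  have leg0: "leg p (i,j) = 0 \<longleftrightarrow> (\<forall>j'<j. (i,j') \<notin> lam p)"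
    unfolding leg_def using legfin by auto
  have "snd (pt p (Suc k0)) \<le> snd (pt p (length p))" using pt_mono[of "Suc k0" "length p" p] k0(1) by simp
  then have "Suc j \<le> n" using pt_Suc[OF k0(1)] k0 pt_len[of p] cN by simp
  then show "leg p (i,j) < n" using leg_le by simp
  show "(((i, j), (Suc i, j)) \<in> segs p \<and> ((Suc i, j), (Suc i, Suc j)) \<in> segs p)
         \<longleftrightarrow> (arm p (i, j) = 0 \<and> leg p (i, j) = 0)"
  proof
    assume "((i, j), (Suc i, j)) \<in> segs p \<and> ((Suc i, j), (Suc i, Suc j)) \<in> segs p"
    then obtain k1 k2 where k1: "k1 < length p" "pt p k1 = (i,j)" "p!k1 = E"
      and k2: "k2 < length p" "pt p k2 = (Suc i,j)" "p!k2 = N"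
      unfolding seg_E seg_N by blast
    have "k2 = k0" using N_unique[OF k2(1) k0(1) k2(3) k0(2)] k2(2) k0(3) by simp
    then have "X = Suc i" using k2 X_def by simp
    then have a0: "arm p (i,j) = 0" using arm_eq by simp
    have "\<forall>j'<j. (i,j') \<notin> lam p"
    proof (intro allI impI notI)
      fix j' assume jj: "j' < j" "(i,j') \<in> lam p"
      then obtain k where k: "k < length p" "p!k = N" "snd (pt p k) = j'" "i < fst (pt p k)"
        unfolding lam_def by auto
      show False
      proof (cases "k1 \<le> k")
        case True
        then show False using pt_mono[OF True, of p] k1 k jj by simp
      next
        case False
        then have "k \<le> k1" by simp
        then show False using pt_mono[of k k1 p] k1 k by simp
      qed
    qed
    then show "arm p (i, j) = 0 \<and> leg p (i, j) = 0" using a0 leg0 by simp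
  next
    assume A: "arm p (i, j) = 0 \<and> leg p (i, j) = 0"
    have XS: "X = Suc i" using A arm_eq k0(4) X_def by simp
    have nol: "\<forall>j'<j. (i,j') \<notin> lam p" using A leg0 by simp
    define m where "m = (LEAST k. i < fst (pt p k))"
    have mk0: "m \<le> k0" unfolding m_def using k0(4) by (rule Least_le)
    have mi: "i < fst (pt p m)" unfolding m_def using k0(4) by (rule LeastI)
    have "m \<noteq> 0"
    proof
      assume "m = 0" then show False using mi pt_0[of p] by simp
    qed
    then obtain k where km: "m = Suc k" using not0_implies_Suc by blast
    have kl: "k < length p" "k < k0" using mk0 km k0(1) by auto
    have nk: "\<not> i < fst (pt p k)" unfolding m_def
      by (rule not_less_Least) (simp add: m_def[symmetric] km)
    have kE: "p!k = E" and kx: "fst (pt p k) = i"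
      using pt_Suc[OF kl(1)] mi km nk by (auto split: if_splits)
    have "snd (pt p k) \<le> j" using pt_mono[of k k0 p] kl k0(3) by simp
    moreover have "j \<le> snd (pt p k)"
    proof (cases "j = 0")
      case False
      define m' where "m' = (LEAST k. j - 1 < snd (pt p k))"
      have "j - 1 < snd (pt p k0)" using False k0(3) by simp
      then have mk0': "m' \<le> k0" and mi': "j - 1 < snd (pt p m')"
        unfolding m'_def by (rule Least_le, rule LeastI)
      have "m' \<noteq> 0"
      proof
        assume "m' = 0" then show False using mi' pt_0[of p] by simp
      qed
      then obtain k' where km': "m' = Suc k'" using not0_implies_Suc by blast
      have kl': "k' < length p" using mk0' km' k0(1) by auto
      have "k' < (LEAST k. j - 1 < snd (pt p k))" using km' m'_def by simp
      then have nk': "\<not> j - 1 < snd (pt p k')" by (rule not_less_Least)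
      have kN': "p!k' = N" and ky': "snd (pt p k') = j - 1"
        using pt_Suc[OF kl'] mi' km' nk' by (auto split: if_splits)
      have "(fst (pt p k'), j - 1) \<notin> lam p \<or> True" by simp
      have "\<not> i < fst (pt p k')"
      proof
        assume "i < fst (pt p k')"
        then have "(i, j - 1) \<in> lam p" unfolding lam_def using kl' kN' ky' by blast
        with nol False show False by simp
      qed
      then have "\<not> k < k'" using pt_mono[of "Suc k" k' p] pt_Suc[OF kl(1)] kE kx by auto
      moreover have "k' \<noteq> k" using kE kN' by auto
      ultimately have "Suc k' \<le> k" by simp
      then show ?thesis using pt_mono[of "Suc k'" k p] pt_Suc[OF kl'] kN' ky' False by simp
    qed simp
    ultimately have "pt p k = (i,j)" using kx by (simp add: prod_eq_iff)
    then have s1: "((i, j), (Suc i, j)) \<in> segs p" unfolding seg_E using kl kE by blast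
    have "pt p k0 = (Suc i, j)" using XS X_def k0(3) by (simp add: prod_eq_iff)
    then have s2: "((Suc i, j), (Suc i, Suc j)) \<in> segs p" unfolding seg_N using k0 by blast
    show "((i, j), (Suc i, j)) \<in> segs p \<and> ((Suc i, j), (Suc i, Suc j)) \<in> segs p" using s1 s2 by simp
  qed
qed

theorem theorem6:
  fixes n :: nat and p :: "step list" and i j :: nat
  assumes "n \<ge> 2" and "dyck n p" and "(i, j) \<in> lam p"
  shows "((frac (arm p (i, j)) (leg p (i, j)) \<le> ereal (real (n - 1) / real n) \<and>
          ereal (real (n - 1) / real n) < frac (arm p (i, j) + 1) (leg p (i, j) + 1))
         \<longleftrightarrow> (((i, j), (Suc i, j)) \<in> segs p \<and> ((Suc i, j), (Suc i, Suc j)) \<in> segs p)) \<and>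
         ((((i, j), (Suc i, j)) \<in> segs p \<and> ((Suc i, j), (Suc i, Suc j)) \<in> segs p)
         \<longleftrightarrow> (arm p (i, j) = 0 \<and> leg p (i, j) = 0))"
proof -
  have cN: "count_list p N = n" using assms(2) unfolding dyck_def by simp
  note c = comb[OF cN assms(3)]
  show ?thesis using frac_lemma[OF assms(1) c(1), of "arm p (i,j)"] c(2) by simp
qed

end
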